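(* For $(\alpha,\beta)\in\mathbb{R}^2$, let $\mathfrak{m}_{\alpha,\beta}$ be the $8$-dimensional real Lie algebra with a basis $\{v^1,\dots,v^8\}$ of its dual satisfying $$dv^1=dv^2=dv^3=0,\quad dv^4=v^{13},\quad dv^5=v^{23},\quad dv^6=v^{14}+v^{25}-v^{35},$$ $$dv^7=\alpha v^{12}+v^{15}+v^{24}+v^{34},\quad dv^8=v^{16}-2\beta v^{25}+v^{27}-\beta v^{35}-v^{45},$$ and let $\{v'^1,\dots,v'^8\}$ be the analogous basis of $\mathfrak{m}_{\alpha',\beta'}^*$. Let $f:\mathfrak{m}_{\alpha,\beta}\to\mathfrak{m}_{\alpha',\beta'}$ be a Lie algebra isomorphism and $F:\bigwedge^*\mathfrak{m}_{\alpha',\beta'}^*\to\bigwedge^*\mathfrak{m}_{\alpha,\beta}^*$ the extension of its dual, written $F(v'^i)=\sum_{j=1}^8\lambda^i_j v^j$, with $\Lambda=(\lambda^i_j)\in GL(8,\mathbb{R})$ and $F(dv'^i)=d(F(v'^i))$ for all $i$. Then $F(v'^i)\wedge v^i=0$ for $i=1,2,3$, and $$F(v'^4)\wedge v^{1234}=0,\quad F(v'^5)\wedge v^{1235}=0,\quad F(v'^6)\wedge v^{123456}=0,\quad F(v'^7)\wedge v^{123457}=0.$$ Therefore $\Lambda$ is lower triangular (i.e. $\lambda^i_j=0$ for $j>i$) and $\prod_{i=1}^8\lambda^i_i=\det\Lambda\neq0$.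
   Context: $v^{ij}=v^i\wedge v^j$, $v^{i_1\cdots i_k}=v^{i_1}\wedge\cdots\wedge v^{i_k}$, and $d$ is the Chevalley–Eilenberg differential. *)

theory Defs
  imports Complex_Main "HOL-Combinatorics.Permutations"
begin

text \<open>Exterior algebra of the dual of an 8-dimensional real vector space with
  basis v^1,...,v^8.  An element is represented by its coefficient function on
  index sets: the coefficient of S (a subset of {1..8}) is the coefficient of
  the basis element v^{s_1 ... s_k} with s_1 < ... < s_k.\<close>

type_synonym form = "nat set \<Rightarrow> real"

definition zero_form :: form where
  "zero_form = (\<lambda>_. 0)"

definition basis_form :: "nat set \<Rightarrow> form" where
  "basis_form S = (\<lambda>U. if U = S then 1 else 0)"

definition vv :: "nat \<Rightarrow> form" where
  "vv i = basis_form {i}"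

definition shuffle_sign :: "nat set \<Rightarrow> nat set \<Rightarrow> real" where
  "shuffle_sign S T = (-1) ^ card {(s, t). s \<in> S \<and> t \<in> T \<and> t < s}"

text \<open>Wedge product: v^S \<and> v^T = shuffle_sign S T v^(S \<union> T) if S, T disjoint, else 0.\<close>
definition wedge :: "form \<Rightarrow> form \<Rightarrow> form" where
  "wedge \<omega> \<eta> = (\<lambda>U. \<Sum>S\<in>Pow U. shuffle_sign S (U - S) * \<omega> S * \<eta> (U - S))"

fun wedge_list :: "form list \<Rightarrow> form" where
  "wedge_list [] = basis_form {}"
| "wedge_list (a # as) = wedge a (wedge_list as)"

definition vs :: "nat list \<Rightarrow> form" where
  "vs is = wedge_list (map vv is)"

definition dv :: "real \<Rightarrow> real \<Rightarrow> nat \<Rightarrow> form" where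
  "dv a b i =
    (if i = 4 then vs [1,3]
     else if i = 5 then vs [2,3]
     else if i = 6 then (\<lambda>U. vs [1,4] U + vs [2,5] U - vs [3,5] U)
     else if i = 7 then (\<lambda>U. a * vs [1,2] U + vs [1,5] U + vs [2,4] U + vs [3,4] U)
     else if i = 8 then (\<lambda>U. vs [1,6] U - 2 * b * vs [2,5] U + vs [2,7] U
                              - b * vs [3,5] U - vs [4,5] U)
     else zero_form)"

definition d1 :: "real \<Rightarrow> real \<Rightarrow> form \<Rightarrow> form" where
  "d1 a b \<omega> = (\<lambda>U. \<Sum>j=1..8. \<omega> {j} * dv a b j U)"

definition Frow :: "(nat \<Rightarrow> nat \<Rightarrow> real) \<Rightarrow> nat \<Rightarrow> form" where
  "Frow \<Lambda> i = (\<lambda>U. \<Sum>j=1..8. \<Lambda> i j * vv j U)"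

text \<open>Extension of F to the whole exterior algebra as algebra homomorphism:
  F(v'^{s_1...s_k}) = F(v'^{s_1}) \<and> ... \<and> F(v'^{s_k}).\<close>
definition Fext :: "(nat \<Rightarrow> nat \<Rightarrow> real) \<Rightarrow> form \<Rightarrow> form" where
  "Fext \<Lambda> \<omega> = (\<lambda>U. \<Sum>S\<in>Pow {1..8}.
      \<omega> S * wedge_list (map (Frow \<Lambda>) (sorted_list_of_set S)) U)"

definition det8 :: "(nat \<Rightarrow> nat \<Rightarrow> real) \<Rightarrow> real" where
  "det8 \<Lambda> = (\<Sum>p | p permutes {1..8}. of_int (sign p) * (\<Prod>i=1..8. \<Lambda> i (p i)))"

end

theory Submission
  imports Defs
begin


lemma det8_row_factor:
  assumes k: "k \<in> {1..8::nat}"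
  shows "(\<Prod>i=1..8. (\<Lambda>(k := r)) i (p i)) = r (p k) * (\<Prod>i\<in>{1..8}-{k}. \<Lambda> i (p i))"
proof -
  have "(\<Prod>i=1..8. (\<Lambda>(k := r)) i (p i)) = (\<Lambda>(k := r)) k (p k) * (\<Prod>i\<in>{1..8}-{k}. (\<Lambda>(k := r)) i (p i))"
    using k by (simp add: prod.remove)
  also have "(\<Prod>i\<in>{1..8}-{k}. (\<Lambda>(k := r)) i (p i)) = (\<Prod>i\<in>{1..8}-{k}. \<Lambda> i (p i))"
    by (rule prod.cong) auto
  finally show ?thesis by simp
qed

lemma det8_linear_row:
  assumes k: "k \<in> {1..8::nat}"
  shows "det8 (\<Lambda>(k := (\<lambda>j. x j + t * y j))) = det8 (\<Lambda>(k := x)) + t * det8 (\<Lambda>(k := y))"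
  unfolding det8_def det8_row_factor[OF k]
  by (simp add: algebra_simps sum.distrib sum_distrib_left)

lemma det8_identical_rows:
  assumes k: "k \<in> {1..8::nat}" and l: "l \<in> {1..8}" and kl: "k \<noteq> l" and eq: "\<Lambda> k = \<Lambda> l"
  shows "det8 \<Lambda> = 0"
proof -
  let ?S = "{p. p permutes {1..8::nat}}"
  let ?t = "transpose k l"
  have tp: "?t permutes {1..8}" using k l by (rule permutes_swap_id)
  define f where "f p = of_int (sign p) * (\<Prod>i=1..8. \<Lambda> i (p i))" for p :: "nat \<Rightarrow> nat"
  have "det8 \<Lambda> = sum f ?S" unfolding det8_def f_def by simp
  also have "\<dots> = sum (\<lambda>p. f (p \<circ> ?t)) ?S" by (rule sum_permutations_compose_right[OF tp])
  also have "\<dots> = sum (\<lambda>p. - f p) ?S"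
  proof (rule sum.cong)
    fix p assume "p \<in> ?S"
    then have pp: "p permutes {1..8}" by simp
    have sg: "sign (p \<circ> ?t) = - sign p"
      using sign_compose[OF permutes_imp_permutation[OF _ pp] permutes_imp_permutation[OF _ tp]] kl
      by (simp add: sign_swap_id)
    have rowsym: "\<Lambda> (?t i) = \<Lambda> i" for i
      using eq by (cases "i = k"; cases "i = l") (auto simp: transpose_def)
    have "(\<Prod>i=1..8. \<Lambda> i ((p \<circ> ?t) i)) = (\<Prod>i=1..8. (\<lambda>i. \<Lambda> (?t i) (p i)) (?t i))"
      by (simp add: rowsym)
    also have "\<dots> = (\<Prod>i=1..8. \<Lambda> (?t i) (p i))"
      by (rule prod.reindex_bij_betw[OF permutes_imp_bij[OF tp]])
    also have "\<dots> = (\<Prod>i=1..8. \<Lambda> i (p i))" by (simp add: rowsym)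
    finally show "f (p \<circ> ?t) = - f p" unfolding f_def sg by simp
  qed simp
  also have "\<dots> = - sum f ?S" by (simp add: sum_negf)
  finally have "det8 \<Lambda> = - det8 \<Lambda>" using \<open>det8 \<Lambda> = sum f ?S\<close> by simp
  then show ?thesis by simp
qed

lemma det8_rowop:
  assumes k: "k \<in> {1..8::nat}" and l: "l \<in> {1..8}" and kl: "k \<noteq> l"
  shows "det8 (\<Lambda>(k := (\<lambda>j. \<Lambda> k j + t * \<Lambda> l j))) = det8 \<Lambda>"
proof -
  have "det8 (\<Lambda>(k := (\<lambda>j. \<Lambda> k j + t * \<Lambda> l j))) = det8 (\<Lambda>(k := \<Lambda> k)) + t * det8 (\<Lambda>(k := \<Lambda> l))"
    by (rule det8_linear_row[OF k])
  moreover have "det8 (\<Lambda>(k := \<Lambda> l)) = 0"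
    by (rule det8_identical_rows[OF k l kl]) (use kl in simp)
  ultimately show ?thesis by simp
qed

lemma det8_hall:
  assumes R: "R \<subseteq> {1..8::nat}" and fC: "finite C" and C: "card C < card R"
    and z: "\<And>i j. i \<in> R \<Longrightarrow> j \<in> {1..8} \<Longrightarrow> j \<notin> C \<Longrightarrow> \<Lambda> i j = 0"
  shows "det8 \<Lambda> = 0"
  unfolding det8_def
proof (rule sum.neutral, rule ballI)
  fix p assume "p \<in> {p. p permutes {1..8::nat}}"
  then have pp: "p permutes {1..8}" by simp
  have "\<exists>i\<in>R. p i \<notin> C"
  proof (rule ccontr)
    assume "\<not> ?thesis"
    then have sub: "p ` R \<subseteq> C" by auto
    have inj: "inj_on p R" using permutes_inj[OF pp] by (simp add: inj_on_def inj_def)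
    have "card R \<le> card C"
      by (rule card_inj_on_le[OF inj sub fC])
    with C show False by simp
  qed
  then obtain i where i: "i \<in> R" "p i \<notin> C" by blast
  have "p i \<in> {1..8}" using permutes_in_image[OF pp, of i] subsetD[OF R i(1)] by simp
  then have "\<Lambda> i (p i) = 0" by (rule z[OF i(1) _ i(2)])
  moreover have "i \<in> {1..8}" using subsetD[OF R i(1)] .
  ultimately have "\<exists>k\<in>{1..8}. \<Lambda> k (p k) = 0" by blast
  then have "(\<Prod>i=1..8. \<Lambda> i (p i)) = 0"
    by (rule prod_zero[OF finite_atLeastAtMost])
  then show "of_int (sign p) * (\<Prod>i=1..8. \<Lambda> i (p i)) = 0" by simp
qed

lemma det8_lower:
  assumes z: "\<And>i j. i \<in> {1..8::nat} \<Longrightarrow> j \<in> {1..8} \<Longrightarrow> i < j \<Longrightarrow> \<Lambda> i j = 0"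
  shows "det8 \<Lambda> = (\<Prod>i=1..8. \<Lambda> i i)"
proof -
  let ?S = "{p. p permutes {1..8::nat}}"
  define f where "f p = of_int (sign p) * (\<Prod>i=1..8. \<Lambda> i (p i))" for p :: "nat \<Rightarrow> nat"
  have zero: "sum f (?S - {id}) = 0"
  proof (rule sum.neutral, rule ballI)
    fix p assume "p \<in> ?S - {id}"
    then have pp: "p permutes {1..8}" and ne: "p \<noteq> id" by auto
    have "\<exists>i\<in>{1..8}. \<not> p i \<le> i"
      using permutes_natset_le[OF pp] ne by blast
    then obtain i where i: "i \<in> {1..8}" "i < p i" using not_le by blast
    have "p i \<in> {1..8}" using permutes_in_image[OF pp, of i] i(1) by simp
    then have "\<Lambda> i (p i) = 0" using z[OF i(1) _ i(2)] by simp
    then have "\<exists>k\<in>{1..8}. \<Lambda> k (p k) = 0" using i(1) by blast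
    then have "(\<Prod>i=1..8. \<Lambda> i (p i)) = 0"
      by (rule prod_zero[OF finite_atLeastAtMost])
    then show "f p = 0" unfolding f_def by simp
  qed
  have "det8 \<Lambda> = sum f ?S" unfolding det8_def f_def by simp
  also have "\<dots> = f id + sum f (?S - {id})"
    by (rule sum.remove) (simp_all add: permutes_id finite_permutations)
  finally show ?thesis using zero unfolding f_def by simp
qed



lemma sum8: "(\<Sum>j=1..8::nat. f j) = f 1 + f 2 + f 3 + f 4 + f 5 + f 6 + f 7 + (f 8 :: real)"
  by (simp add: eval_nat_numeral)

lemma basis_eval: "basis_form S U = (if U = S then 1 else 0)"
  by (simp add: basis_form_def)

lemma wedge_vv_basis:
  assumes fT: "finite T" and aT: "a \<notin> T" and lt: "\<forall>t\<in>T. a < t"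
  shows "wedge (vv a) (basis_form T) = basis_form (insert a T)"
proof
  fix U
  show "wedge (vv a) (basis_form T) U = basis_form (insert a T) U"
  proof (cases "finite U")
    case False
    then have "U \<noteq> insert a T" using fT by auto
    then show ?thesis using False by (simp add: wedge_def basis_form_def del: Pow_iff)
  next
    case True
    have "wedge (vv a) (basis_form T) U
        = (\<Sum>S\<in>Pow U. if S = {a} then shuffle_sign {a} (U - {a}) * (if U - {a} = T then 1 else 0) else 0)"
      unfolding wedge_def vv_def basis_form_def by (rule sum.cong) auto
    also have "\<dots> = (if a \<in> U then shuffle_sign {a} (U - {a}) * (if U - {a} = T then 1 else 0) else 0)"
      using True by (simp add: sum.delta)
    also have "\<dots> = basis_form (insert a T) U"
    proof (cases "a \<in> U")
      case aU: True
      have "{(s, t). s \<in> {a} \<and> t \<in> T \<and> t < s} = {}" using lt by auto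
      then have sg: "shuffle_sign {a} T = 1" unfolding shuffle_sign_def by (simp only: card.empty power_0)
      show ?thesis
      proof (cases "U = insert a T")
        case True
        then have "U - {a} = T" using aT by simp
        then show ?thesis using aU sg True by (simp add: basis_form_def)
      next
        case False
        then have "U - {a} \<noteq> T" using aU by blast
        then show ?thesis using aU False by (simp add: basis_form_def)
      qed
    next
      case False
      then have "U \<noteq> insert a T" by blast
      then show ?thesis using False by (simp add: basis_form_def)
    qed
    finally show ?thesis .
  qed
qed

lemma vs_sorted: "sorted_wrt (<) xs \<Longrightarrow> vs xs = basis_form (set xs)"
proof (induction xs)
  case Nil
  then show ?case by (simp add: vs_def)
next
  case (Cons a xs)
  have "vs (a # xs) = wedge (vv a) (vs xs)" by (simp add: vs_def)
  also have "\<dots> = wedge (vv a) (basis_form (set xs))" using Cons by simp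
  also have "\<dots> = basis_form (insert a (set xs))"
    by (rule wedge_vv_basis) (use Cons.prems in auto)
  finally show ?case by simp
qed

lemma vs2: "a < b \<Longrightarrow> vs [a, b] = basis_form {a, b}"
  by (simp add: vs_sorted)

lemma basis2_eval:
  assumes "(a::nat) < b" "p < q"
  shows "basis_form {a, b} {p, q} = (if a = p \<and> b = q then 1 else 0)"
  using assms by (auto simp: basis_form_def doubleton_eq_iff)

lemma Frow_single: "Frow \<Lambda> i {p} = (if p \<in> {1..8} then \<Lambda> i p else 0)"
proof -
  have "Frow \<Lambda> i {p} = (\<Sum>j=1..8. if j = p then \<Lambda> i p else 0)"
    unfolding Frow_def vv_def basis_form_def by (rule sum.cong) auto
  then show ?thesis by (simp only: sum.delta finite_atLeastAtMost)
qed

lemma Frow_nonsingle: "(\<forall>j. S \<noteq> {j}) \<Longrightarrow> Frow \<Lambda> i S = 0"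
  unfolding Frow_def vv_def basis_form_def by simp

lemma wedge_empty: "finite U \<Longrightarrow> wedge \<omega> (basis_form {}) U = \<omega> U"
proof -
  assume fU: "finite U"
  have "wedge \<omega> (basis_form {}) U = (\<Sum>S\<in>Pow U. if S = U then shuffle_sign U {} * \<omega> U else 0)"
    unfolding wedge_def basis_form_def by (rule sum.cong) auto
  also have "\<dots> = shuffle_sign U {} * \<omega> U" using fU by (simp add: sum.delta)
  also have "shuffle_sign U {} = 1" by (simp add: shuffle_sign_def)
  finally show ?thesis by simp
qed

lemma wedge_cong_fin:
  assumes "\<And>V. finite V \<Longrightarrow> \<eta> V = \<eta>' V" "finite U"
  shows "wedge \<omega> \<eta> U = wedge \<omega> \<eta>' U"
  unfolding wedge_def
  by (rule sum.cong) (use assms in \<open>auto intro: finite_subset\<close>)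

lemma wedge_Frow2:
  assumes pq: "p < q" "p \<in> {1..8}" "q \<in> {1..8}"
  shows "wedge (Frow \<Lambda> a) (Frow \<Lambda> b) {p, q} = \<Lambda> a p * \<Lambda> b q - \<Lambda> a q * \<Lambda> b p"
proof -
  have ne: "p \<noteq> q" using pq by simp
  have s1: "shuffle_sign {p} {q} = 1"
  proof -
    have e: "{(s, t). s \<in> {p} \<and> t \<in> {q} \<and> t < s} = {}" using pq by auto
    show ?thesis unfolding shuffle_sign_def e by simp
  qed
  have s2: "shuffle_sign {q} {p} = -1"
  proof -
    have e: "{(s, t). s \<in> {q} \<and> t \<in> {p} \<and> t < s} = {(q, p)}" using pq by auto
    show ?thesis unfolding shuffle_sign_def e by simp
  qed
  have z1: "Frow \<Lambda> i {} = 0" for i by (rule Frow_nonsingle) auto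
  have z2: "Frow \<Lambda> i {p, q} = 0" for i by (rule Frow_nonsingle) (use ne in \<open>auto simp: doubleton_eq_iff\<close>)
  have d1: "{p, q} - {p} = {q}" "{p, q} - {q} = {p}" "{p,q} - {p,q} = {}" using ne by auto
  let ?g = "\<lambda>S. shuffle_sign S ({p, q} - S) * Frow \<Lambda> a S * Frow \<Lambda> b ({p, q} - S)"
  have "wedge (Frow \<Lambda> a) (Frow \<Lambda> b) {p, q} = sum ?g (Pow {p, q})" unfolding wedge_def ..
  also have "\<dots> = sum ?g {{p}, {q}}"
  proof (rule sum.mono_neutral_right)
    show "\<forall>S\<in>Pow {p, q} - {{p}, {q}}. ?g S = 0"
    proof
      fix S assume S: "S \<in> Pow {p, q} - {{p}, {q}}"
      have "\<forall>j. S \<noteq> {j}" using S by auto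
      then show "?g S = 0" by (simp add: Frow_nonsingle)
    qed
  qed auto
  also have "\<dots> = ?g {p} + ?g {q}" using ne by simp
  also have "\<dots> = \<Lambda> a p * \<Lambda> b q - \<Lambda> a q * \<Lambda> b p"
    using d1 s1 s2 pq by (simp add: Frow_single)
  finally show ?thesis .
qed

lemma Fext_add: "Fext \<Lambda> (\<lambda>U. f U + g U) = (\<lambda>U. Fext \<Lambda> f U + Fext \<Lambda> g U)"
  unfolding Fext_def by (simp add: algebra_simps sum.distrib)

lemma Fext_diff: "Fext \<Lambda> (\<lambda>U. f U - g U) = (\<lambda>U. Fext \<Lambda> f U - Fext \<Lambda> g U)"
  unfolding Fext_def by (simp add: algebra_simps sum_subtractf)

lemma Fext_cmul: "Fext \<Lambda> (\<lambda>U. c * f U) = (\<lambda>U. c * Fext \<Lambda> f U)"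
  unfolding Fext_def by (simp add: algebra_simps sum_distrib_left)

lemma Fext_zero: "Fext \<Lambda> zero_form = zero_form"
  unfolding Fext_def zero_form_def by simp

lemma Fext_zero': "Fext \<Lambda> (\<lambda>_. 0) = (\<lambda>_. 0)"
  unfolding Fext_def by simp

lemma Fext_b2:
  assumes ab: "a < b" "a \<in> {1..8}" "b \<in> {1..8}" and pq: "p < q" "p \<in> {1..8}" "q \<in> {1..8}"
  shows "Fext \<Lambda> (basis_form {a, b}) {p, q} = \<Lambda> a p * \<Lambda> b q - \<Lambda> a q * \<Lambda> b p"
proof -
  have mem: "{a, b} \<in> Pow {1..8::nat}" using ab by auto
  have "Fext \<Lambda> (basis_form {a, b}) {p, q}
      = (\<Sum>S\<in>Pow {1..8}. if S = {a, b} then wedge_list (map (Frow \<Lambda>) (sorted_list_of_set {a, b})) {p, q} else 0)"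
    unfolding Fext_def basis_form_def by (rule sum.cong) auto
  also have "\<dots> = wedge_list (map (Frow \<Lambda>) (sorted_list_of_set {a, b})) {p, q}"
    using mem by (simp add: sum.delta)
  also have "sorted_list_of_set {a, b} = [a, b]" using ab by simp
  also have "wedge_list (map (Frow \<Lambda>) [a, b]) {p, q} = wedge (Frow \<Lambda> a) (wedge (Frow \<Lambda> b) (basis_form {})) {p, q}"
    by simp
  also have "\<dots> = wedge (Frow \<Lambda> a) (Frow \<Lambda> b) {p, q}"
    by (rule wedge_cong_fin) (auto simp: wedge_empty)
  also have "\<dots> = \<Lambda> a p * \<Lambda> b q - \<Lambda> a q * \<Lambda> b p" by (rule wedge_Frow2[OF pq])
  finally show ?thesis .
qed

lemma eqn:
  assumes hom: "\<forall>i\<in>{1..8}. Fext \<Lambda> (dv \<alpha>' \<beta>' i) = d1 \<alpha> \<beta> (Frow \<Lambda> i)"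
    and i: "i \<in> {1..8}"
  shows "Fext \<Lambda> (dv \<alpha>' \<beta>' i) {p, q} = (\<Sum>j=1..8. \<Lambda> i j * dv \<alpha> \<beta> j {p, q})"
proof -
  have "Fext \<Lambda> (dv \<alpha>' \<beta>' i) {p, q} = d1 \<alpha> \<beta> (Frow \<Lambda> i) {p, q}" using hom i by simp
  also have "\<dots> = (\<Sum>j=1..8. \<Lambda> i j * dv \<alpha> \<beta> j {p, q})"
    unfolding d1_def by (rule sum.cong) (auto simp: Frow_single)
  finally show ?thesis .
qed

lemmas evsimps = dv_def vs2 Fext_add Fext_diff Fext_cmul Fext_zero Fext_zero' Fext_b2 basis2_eval sum8 zero_form_def

lemma in18: "(i::nat) \<in> {1..8} \<Longrightarrow> i = 1 \<or> i = 2 \<or> i = 3 \<or> i = 4 \<or> i = 5 \<or> i = 6 \<or> i = 7 \<or> i = 8"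
  by auto

lemma wedge_Frow_basis_zero:
  assumes z: "\<And>j. j \<in> {1..8} \<Longrightarrow> j \<notin> T \<Longrightarrow> \<Lambda> i j = 0"
  shows "wedge (Frow \<Lambda> i) (basis_form T) = zero_form"
proof
  fix U
  show "wedge (Frow \<Lambda> i) (basis_form T) U = zero_form U"
    unfolding wedge_def zero_form_def
  proof (rule sum.neutral, rule ballI)
    fix S assume S: "S \<in> Pow U"
    show "shuffle_sign S (U - S) * Frow \<Lambda> i S * basis_form T (U - S) = 0"
    proof (cases "\<exists>j. S = {j}")
      case False
      then show ?thesis by (simp add: Frow_nonsingle)
    next
      case True
      then obtain j where j: "S = {j}" by blast
      show ?thesis
      proof (cases "U - S = T")
        case True
        then have "j \<notin> T" using j by auto
        then show ?thesis using j z by (simp add: Frow_single)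
      next
        case False
        then show ?thesis by (simp add: basis_form_def)
      qed
    qed
  qed
qed

theorem lemma3p5:
  fixes \<alpha> \<beta> \<alpha>' \<beta>' :: real and \<Lambda> :: "nat \<Rightarrow> nat \<Rightarrow> real"
  assumes GL: "det8 \<Lambda> \<noteq> 0"
    and hom: "\<forall>i\<in>{1..8}. Fext \<Lambda> (dv \<alpha>' \<beta>' i) = d1 \<alpha> \<beta> (Frow \<Lambda> i)"
  shows "(\<forall>i\<in>{1,2,3}. wedge (Frow \<Lambda> i) (vv i) = zero_form)
    \<and> wedge (Frow \<Lambda> 4) (vs [1,2,3,4]) = zero_form
    \<and> wedge (Frow \<Lambda> 5) (vs [1,2,3,5]) = zero_form
    \<and> wedge (Frow \<Lambda> 6) (vs [1,2,3,4,5,6]) = zero_form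
    \<and> wedge (Frow \<Lambda> 7) (vs [1,2,3,4,5,7]) = zero_form
    \<and> (\<forall>i\<in>{1..8}. \<forall>j\<in>{1..8}. i < j \<longrightarrow> \<Lambda> i j = 0)
    \<and> (\<Prod>i=1..8. \<Lambda> i i) = det8 \<Lambda>
    \<and> det8 \<Lambda> \<noteq> 0"
proof -
  have E1_13: "0 = \<Lambda> 1 4"
    using eqn[OF hom, of 1 1 3, unfolded sum8] by (simp add: evsimps algebra_simps)
  have E1_23: "0 = \<Lambda> 1 5"
    using eqn[OF hom, of 1 2 3, unfolded sum8] by (simp add: evsimps algebra_simps)
  have E1_14: "0 = \<Lambda> 1 6"
    using eqn[OF hom, of 1 1 4, unfolded sum8] by (simp add: evsimps algebra_simps)
  have E1_15: "0 = \<Lambda> 1 7"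
    using eqn[OF hom, of 1 1 5, unfolded sum8] by (simp add: evsimps algebra_simps)
  have E1_16: "0 = \<Lambda> 1 8"
    using eqn[OF hom, of 1 1 6, unfolded sum8] by (simp add: evsimps algebra_simps)
  have E2_13: "0 = \<Lambda> 2 4"
    using eqn[OF hom, of 2 1 3, unfolded sum8] by (simp add: evsimps algebra_simps)
  have E2_23: "0 = \<Lambda> 2 5"
    using eqn[OF hom, of 2 2 3, unfolded sum8] by (simp add: evsimps algebra_simps)
  have E2_14: "0 = \<Lambda> 2 6"
    using eqn[OF hom, of 2 1 4, unfolded sum8] by (simp add: evsimps algebra_simps)
  have E2_15: "0 = \<Lambda> 2 7"
    using eqn[OF hom, of 2 1 5, unfolded sum8] by (simp add: evsimps algebra_simps)
  have E2_16: "0 = \<Lambda> 2 8"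
    using eqn[OF hom, of 2 1 6, unfolded sum8] by (simp add: evsimps algebra_simps)
  have E3_13: "0 = \<Lambda> 3 4"
    using eqn[OF hom, of 3 1 3, unfolded sum8] by (simp add: evsimps algebra_simps)
  have E3_23: "0 = \<Lambda> 3 5"
    using eqn[OF hom, of 3 2 3, unfolded sum8] by (simp add: evsimps algebra_simps)
  have E3_14: "0 = \<Lambda> 3 6"
    using eqn[OF hom, of 3 1 4, unfolded sum8] by (simp add: evsimps algebra_simps)
  have E3_15: "0 = \<Lambda> 3 7"
    using eqn[OF hom, of 3 1 5, unfolded sum8] by (simp add: evsimps algebra_simps)
  have E3_16: "0 = \<Lambda> 3 8"
    using eqn[OF hom, of 3 1 6, unfolded sum8] by (simp add: evsimps algebra_simps)
  have E4_12: "(\<Lambda> 1 1 * \<Lambda> 3 2 - \<Lambda> 1 2 * \<Lambda> 3 1) = \<alpha> * \<Lambda> 4 7"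
    using eqn[OF hom, of 4 1 2, unfolded sum8] by (simp add: evsimps algebra_simps)
  have E4_13: "(\<Lambda> 1 1 * \<Lambda> 3 3 - \<Lambda> 1 3 * \<Lambda> 3 1) = \<Lambda> 4 4"
    using eqn[OF hom, of 4 1 3, unfolded sum8] by (simp add: evsimps algebra_simps)
  have E4_23: "(\<Lambda> 1 2 * \<Lambda> 3 3 - \<Lambda> 1 3 * \<Lambda> 3 2) = \<Lambda> 4 5"
    using eqn[OF hom, of 4 2 3, unfolded sum8] by (simp add: evsimps algebra_simps)
  have E4_14: "(\<Lambda> 1 1 * \<Lambda> 3 4 - \<Lambda> 1 4 * \<Lambda> 3 1) = \<Lambda> 4 6"
    using eqn[OF hom, of 4 1 4, unfolded sum8] by (simp add: evsimps algebra_simps)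
  have E4_15: "(\<Lambda> 1 1 * \<Lambda> 3 5 - \<Lambda> 1 5 * \<Lambda> 3 1) = \<Lambda> 4 7"
    using eqn[OF hom, of 4 1 5, unfolded sum8] by (simp add: evsimps algebra_simps)
  have E4_16: "(\<Lambda> 1 1 * \<Lambda> 3 6 - \<Lambda> 1 6 * \<Lambda> 3 1) = \<Lambda> 4 8"
    using eqn[OF hom, of 4 1 6, unfolded sum8] by (simp add: evsimps algebra_simps)
  have E5_12: "(\<Lambda> 2 1 * \<Lambda> 3 2 - \<Lambda> 2 2 * \<Lambda> 3 1) = \<alpha> * \<Lambda> 5 7"
    using eqn[OF hom, of 5 1 2, unfolded sum8] by (simp add: evsimps algebra_simps)
  have E5_13: "(\<Lambda> 2 1 * \<Lambda> 3 3 - \<Lambda> 2 3 * \<Lambda> 3 1) = \<Lambda> 5 4"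
    using eqn[OF hom, of 5 1 3, unfolded sum8] by (simp add: evsimps algebra_simps)
  have E5_23: "(\<Lambda> 2 2 * \<Lambda> 3 3 - \<Lambda> 2 3 * \<Lambda> 3 2) = \<Lambda> 5 5"
    using eqn[OF hom, of 5 2 3, unfolded sum8] by (simp add: evsimps algebra_simps)
  have E5_14: "(\<Lambda> 2 1 * \<Lambda> 3 4 - \<Lambda> 2 4 * \<Lambda> 3 1) = \<Lambda> 5 6"
    using eqn[OF hom, of 5 1 4, unfolded sum8] by (simp add: evsimps algebra_simps)
  have E5_15: "(\<Lambda> 2 1 * \<Lambda> 3 5 - \<Lambda> 2 5 * \<Lambda> 3 1) = \<Lambda> 5 7"
    using eqn[OF hom, of 5 1 5, unfolded sum8] by (simp add: evsimps algebra_simps)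
  have E5_16: "(\<Lambda> 2 1 * \<Lambda> 3 6 - \<Lambda> 2 6 * \<Lambda> 3 1) = \<Lambda> 5 8"
    using eqn[OF hom, of 5 1 6, unfolded sum8] by (simp add: evsimps algebra_simps)
  have E6_15: "(\<Lambda> 1 1 * \<Lambda> 4 5 - \<Lambda> 1 5 * \<Lambda> 4 1) + (\<Lambda> 2 1 * \<Lambda> 5 5 - \<Lambda> 2 5 * \<Lambda> 5 1) - (\<Lambda> 3 1 * \<Lambda> 5 5 - \<Lambda> 3 5 * \<Lambda> 5 1) = \<Lambda> 6 7"
    using eqn[OF hom, of 6 1 5, unfolded sum8] by (simp add: evsimps algebra_simps)
  have E6_25: "(\<Lambda> 1 2 * \<Lambda> 4 5 - \<Lambda> 1 5 * \<Lambda> 4 2) + (\<Lambda> 2 2 * \<Lambda> 5 5 - \<Lambda> 2 5 * \<Lambda> 5 2) - (\<Lambda> 3 2 * \<Lambda> 5 5 - \<Lambda> 3 5 * \<Lambda> 5 2) = \<Lambda> 6 6 - 2 * \<beta> * \<Lambda> 6 8"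
    using eqn[OF hom, of 6 2 5, unfolded sum8] by (simp add: evsimps algebra_simps)
  have E6_34: "(\<Lambda> 1 3 * \<Lambda> 4 4 - \<Lambda> 1 4 * \<Lambda> 4 3) + (\<Lambda> 2 3 * \<Lambda> 5 4 - \<Lambda> 2 4 * \<Lambda> 5 3) - (\<Lambda> 3 3 * \<Lambda> 5 4 - \<Lambda> 3 4 * \<Lambda> 5 3) = \<Lambda> 6 7"
    using eqn[OF hom, of 6 3 4, unfolded sum8] by (simp add: evsimps algebra_simps)
  have E6_16: "(\<Lambda> 1 1 * \<Lambda> 4 6 - \<Lambda> 1 6 * \<Lambda> 4 1) + (\<Lambda> 2 1 * \<Lambda> 5 6 - \<Lambda> 2 6 * \<Lambda> 5 1) - (\<Lambda> 3 1 * \<Lambda> 5 6 - \<Lambda> 3 6 * \<Lambda> 5 1) = \<Lambda> 6 8"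
    using eqn[OF hom, of 6 1 6, unfolded sum8] by (simp add: evsimps algebra_simps)
  have E7_14: "\<alpha>' * (\<Lambda> 1 1 * \<Lambda> 2 4 - \<Lambda> 1 4 * \<Lambda> 2 1) + (\<Lambda> 1 1 * \<Lambda> 5 4 - \<Lambda> 1 4 * \<Lambda> 5 1) + (\<Lambda> 2 1 * \<Lambda> 4 4 - \<Lambda> 2 4 * \<Lambda> 4 1) + (\<Lambda> 3 1 * \<Lambda> 4 4 - \<Lambda> 3 4 * \<Lambda> 4 1) = \<Lambda> 7 6"
    using eqn[OF hom, of 7 1 4, unfolded sum8] by (simp add: evsimps algebra_simps)
  have E7_25: "\<alpha>' * (\<Lambda> 1 2 * \<Lambda> 2 5 - \<Lambda> 1 5 * \<Lambda> 2 2) + (\<Lambda> 1 2 * \<Lambda> 5 5 - \<Lambda> 1 5 * \<Lambda> 5 2) + (\<Lambda> 2 2 * \<Lambda> 4 5 - \<Lambda> 2 5 * \<Lambda> 4 2) + (\<Lambda> 3 2 * \<Lambda> 4 5 - \<Lambda> 3 5 * \<Lambda> 4 2) = \<Lambda> 7 6 - 2 * \<beta> * \<Lambda> 7 8"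
    using eqn[OF hom, of 7 2 5, unfolded sum8] by (simp add: evsimps algebra_simps)
  have E7_15: "\<alpha>' * (\<Lambda> 1 1 * \<Lambda> 2 5 - \<Lambda> 1 5 * \<Lambda> 2 1) + (\<Lambda> 1 1 * \<Lambda> 5 5 - \<Lambda> 1 5 * \<Lambda> 5 1) + (\<Lambda> 2 1 * \<Lambda> 4 5 - \<Lambda> 2 5 * \<Lambda> 4 1) + (\<Lambda> 3 1 * \<Lambda> 4 5 - \<Lambda> 3 5 * \<Lambda> 4 1) = \<Lambda> 7 7"
    using eqn[OF hom, of 7 1 5, unfolded sum8] by (simp add: evsimps algebra_simps)
  have E7_16: "\<alpha>' * (\<Lambda> 1 1 * \<Lambda> 2 6 - \<Lambda> 1 6 * \<Lambda> 2 1) + (\<Lambda> 1 1 * \<Lambda> 5 6 - \<Lambda> 1 6 * \<Lambda> 5 1) + (\<Lambda> 2 1 * \<Lambda> 4 6 - \<Lambda> 2 6 * \<Lambda> 4 1) + (\<Lambda> 3 1 * \<Lambda> 4 6 - \<Lambda> 3 6 * \<Lambda> 4 1) = \<Lambda> 7 8"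
    using eqn[OF hom, of 7 1 6, unfolded sum8] by (simp add: evsimps algebra_simps)
  have E8_26: "(\<Lambda> 1 2 * \<Lambda> 6 6 - \<Lambda> 1 6 * \<Lambda> 6 2) - 2 * \<beta>' * (\<Lambda> 2 2 * \<Lambda> 5 6 - \<Lambda> 2 6 * \<Lambda> 5 2) + (\<Lambda> 2 2 * \<Lambda> 7 6 - \<Lambda> 2 6 * \<Lambda> 7 2) - \<beta>' * (\<Lambda> 3 2 * \<Lambda> 5 6 - \<Lambda> 3 6 * \<Lambda> 5 2) - (\<Lambda> 4 2 * \<Lambda> 5 6 - \<Lambda> 4 6 * \<Lambda> 5 2) = 0"
    using eqn[OF hom, of 8 2 6, unfolded sum8] by (simp add: evsimps algebra_simps)
  have E8_37: "(\<Lambda> 1 3 * \<Lambda> 6 7 - \<Lambda> 1 7 * \<Lambda> 6 3) - 2 * \<beta>' * (\<Lambda> 2 3 * \<Lambda> 5 7 - \<Lambda> 2 7 * \<Lambda> 5 3) + (\<Lambda> 2 3 * \<Lambda> 7 7 - \<Lambda> 2 7 * \<Lambda> 7 3) - \<beta>' * (\<Lambda> 3 3 * \<Lambda> 5 7 - \<Lambda> 3 7 * \<Lambda> 5 3) - (\<Lambda> 4 3 * \<Lambda> 5 7 - \<Lambda> 4 7 * \<Lambda> 5 3) = 0"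
    using eqn[OF hom, of 8 3 7, unfolded sum8] by (simp add: evsimps algebra_simps)
  note Z1 = E1_13[symmetric] E1_23[symmetric] E1_14[symmetric] E1_15[symmetric] E1_16[symmetric]
    E2_13[symmetric] E2_23[symmetric] E2_14[symmetric] E2_15[symmetric] E2_16[symmetric]
    E3_13[symmetric] E3_23[symmetric] E3_14[symmetric] E3_15[symmetric] E3_16[symmetric]
  have z46: "\<Lambda> 4 6 = 0" using E4_14 Z1 by simp
  have z47: "\<Lambda> 4 7 = 0" using E4_15 Z1 by simp
  have z48: "\<Lambda> 4 8 = 0" using E4_16 Z1 by simp
  have z56: "\<Lambda> 5 6 = 0" using E5_14 Z1 by simp
  have z57: "\<Lambda> 5 7 = 0" using E5_15 Z1 by simp
  have z58: "\<Lambda> 5 8 = 0" using E5_16 Z1 by simp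
  note Z2 = Z1 z46 z47 z48 z56 z57 z58
  have h1: "\<Lambda> 1 1 * \<Lambda> 3 2 = \<Lambda> 1 2 * \<Lambda> 3 1" using E4_12 z47 by simp
  have h2: "\<Lambda> 2 1 * \<Lambda> 3 2 = \<Lambda> 2 2 * \<Lambda> 3 1" using E5_12 z57 by simp
  have L3: "\<Lambda> 3 1 = 0 \<and> \<Lambda> 3 2 = 0"
  proof (rule ccontr)
    assume nz: "\<not> (\<Lambda> 3 1 = 0 \<and> \<Lambda> 3 2 = 0)"
    obtain s t where st: "\<Lambda> 1 1 = s * \<Lambda> 3 1" "\<Lambda> 1 2 = s * \<Lambda> 3 2"
        "\<Lambda> 2 1 = t * \<Lambda> 3 1" "\<Lambda> 2 2 = t * \<Lambda> 3 2"
    proof (cases "\<Lambda> 3 1 = 0")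
      case True
      then have "\<Lambda> 3 2 \<noteq> 0" using nz by simp
      then show ?thesis using h1 h2 True
        by (intro that[of "\<Lambda> 1 2 / \<Lambda> 3 2" "\<Lambda> 2 2 / \<Lambda> 3 2"]) (auto simp: field_simps)
    next
      case False
      then show ?thesis using h1 h2
        by (intro that[of "\<Lambda> 1 1 / \<Lambda> 3 1" "\<Lambda> 2 1 / \<Lambda> 3 1"]) (auto simp: field_simps)
    qed
    define M1 where "M1 = \<Lambda>(1 := (\<lambda>j. \<Lambda> 1 j + (- s) * \<Lambda> 3 j))"
    define M2 where "M2 = M1(2 := (\<lambda>j. M1 2 j + (- t) * M1 3 j))"
    have d1: "det8 M1 = det8 \<Lambda>" unfolding M1_def by (rule det8_rowop) auto
    have d2: "det8 M2 = det8 M1" unfolding M2_def by (rule det8_rowop) auto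
    have "det8 M2 = 0"
    proof (rule det8_hall[where R = "{1,2}" and C = "{3}"])
      fix i j :: nat assume i: "i \<in> {1,2}" and j: "j \<in> {1..8}" "j \<notin> {3}"
      from i have "i = 1 \<or> i = 2" by simp
      moreover from in18[OF j(1)] j(2) have "j = 1 \<or> j = 2 \<or> j = 4 \<or> j = 5 \<or> j = 6 \<or> j = 7 \<or> j = 8" by auto
      ultimately show "M2 i j = 0" unfolding M2_def M1_def using st Z2 by auto
    qed auto
    with d1 d2 GL show False by simp
  qed
  have L33: "\<Lambda> 3 3 \<noteq> 0"
  proof
    assume z: "\<Lambda> 3 3 = 0"
    have "det8 \<Lambda> = 0"
    proof (rule det8_hall[where R = "{3}" and C = "{}"])
      fix i j :: nat assume i: "i \<in> {3}" and j: "j \<in> {1..8}" "j \<notin> {}"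
      from in18[OF j(1)] show "\<Lambda> i j = 0" using i z L3 Z2 by auto
    qed auto
    with GL show False by simp
  qed
  have e45: "\<Lambda> 4 5 = \<Lambda> 1 2 * \<Lambda> 3 3" using E4_23 L3 by simp
  have e55: "\<Lambda> 5 5 = \<Lambda> 2 2 * \<Lambda> 3 3" using E5_23 L3 by simp
  have e44: "\<Lambda> 4 4 = \<Lambda> 1 1 * \<Lambda> 3 3" using E4_13 L3 by simp
  have e54: "\<Lambda> 5 4 = \<Lambda> 2 1 * \<Lambda> 3 3" using E5_13 L3 by simp
  have z68: "\<Lambda> 6 8 = 0" using E6_16 Z2 by simp
  have z78: "\<Lambda> 7 8 = 0" using E7_16 Z2 by simp
  have e66: "\<Lambda> 6 6 = \<Lambda> 1 2 * \<Lambda> 4 5 + \<Lambda> 2 2 * \<Lambda> 5 5" using E6_25 Z2 L3 z68 by simp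
  have e76: "\<Lambda> 7 6 = \<Lambda> 1 2 * \<Lambda> 5 5 + \<Lambda> 2 2 * \<Lambda> 4 5" using E7_25 Z2 L3 z78 by simp
  have e76b: "\<Lambda> 7 6 = \<Lambda> 1 1 * \<Lambda> 5 4 + \<Lambda> 2 1 * \<Lambda> 4 4" using E7_14 Z2 L3 by simp
  have e826: "\<Lambda> 1 2 * \<Lambda> 6 6 + \<Lambda> 2 2 * \<Lambda> 7 6 = 0" using E8_26 Z2 L3 by simp
  have "\<Lambda> 3 3 * (\<Lambda> 1 2 * (\<Lambda> 1 2 ^ 2 + 3 * \<Lambda> 2 2 ^ 2)) = 0"
    using e826 e66 e76 e45 e55 by algebra
  then have b3: "\<Lambda> 1 2 * (\<Lambda> 1 2 ^ 2 + 3 * \<Lambda> 2 2 ^ 2) = 0" using L33 by simp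
  have z12: "\<Lambda> 1 2 = 0"
  proof (rule ccontr)
    assume "\<Lambda> 1 2 \<noteq> 0"
    then have "\<Lambda> 1 2 ^ 2 + 3 * \<Lambda> 2 2 ^ 2 > 0" by (simp add: add_pos_nonneg)
    with b3 \<open>\<Lambda> 1 2 \<noteq> 0\<close> show False by simp
  qed
  have a11: "\<Lambda> 1 1 \<noteq> 0"
  proof
    assume z: "\<Lambda> 1 1 = 0"
    have "det8 \<Lambda> = 0"
    proof (rule det8_hall[where R = "{1,3}" and C = "{3}"])
      fix i j :: nat assume i: "i \<in> {1,3}" and j: "j \<in> {1..8}" "j \<notin> {3}"
      from i have "i = 1 \<or> i = 3" by simp
      with in18[OF j(1)] j(2) show "\<Lambda> i j = 0" using z z12 L3 Z2 by auto
    qed auto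
    with GL show False by simp
  qed
  have a22: "\<Lambda> 2 2 \<noteq> 0"
  proof
    assume z: "\<Lambda> 2 2 = 0"
    have "det8 \<Lambda> = 0"
    proof (rule det8_hall[where R = "{1,2,3}" and C = "{1,3}"])
      fix i j :: nat assume i: "i \<in> {1,2,3}" and j: "j \<in> {1..8}" "j \<notin> {1,3}"
      from i have "i = 1 \<or> i = 2 \<or> i = 3" by simp
      with in18[OF j(1)] j(2) show "\<Lambda> i j = 0" using z z12 L3 Z2 by auto
    qed auto
    with GL show False by simp
  qed
  have "\<Lambda> 3 3 * (\<Lambda> 1 1 * \<Lambda> 2 1) = 0"
    using e76 e76b z12 e45 e55 e54 e44 by algebra
  then have z21: "\<Lambda> 2 1 = 0" using L33 a11 by simp
  have z45: "\<Lambda> 4 5 = 0" using e45 z12 by simp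
  have z54: "\<Lambda> 5 4 = 0" using e54 z21 by simp
  have z76: "\<Lambda> 7 6 = 0" using e76 z12 z45 by simp
  have e67: "\<Lambda> 6 7 = 0" using E6_15 Z2 L3 z45 z21 by simp
  have "\<Lambda> 6 7 = \<Lambda> 1 3 * \<Lambda> 4 4" using E6_34 Z2 L3 z54 z45 by simp
  then have "\<Lambda> 1 3 * (\<Lambda> 1 1 * \<Lambda> 3 3) = 0" using e67 e44 by simp
  then have z13: "\<Lambda> 1 3 = 0" using L33 a11 by simp
  have e77: "\<Lambda> 7 7 = \<Lambda> 1 1 * \<Lambda> 5 5" using E7_15 Z2 L3 z21 z45 by simp
  have "\<Lambda> 2 3 * \<Lambda> 7 7 = 0" using E8_37 Z2 L3 z13 by simp
  then have z23: "\<Lambda> 2 3 = 0" using e77 e55 L33 a11 a22 by simp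
  note Z = Z2 L3 z12 z13 z21 z23 z45 z54 e67 z68 z76 z78
  have lower: "\<forall>i\<in>{1..8}. \<forall>j\<in>{1..8}. i < j \<longrightarrow> \<Lambda> i j = 0"
  proof (intro ballI impI)
    fix i j :: nat assume i: "i \<in> {1..8}" and j: "j \<in> {1..8}" and ij: "i < j"
    from in18[OF i] in18[OF j] ij show "\<Lambda> i j = 0" using Z by auto
  qed
  have w123: "\<forall>i\<in>{1,2,3}. wedge (Frow \<Lambda> i) (vv i) = zero_form"
  proof
    fix i :: nat assume i: "i \<in> {1,2,3}"
    show "wedge (Frow \<Lambda> i) (vv i) = zero_form" unfolding vv_def
    proof (rule wedge_Frow_basis_zero)
      fix j assume j: "j \<in> {1..8}" "j \<notin> {i}"
      from i have "i = 1 \<or> i = 2 \<or> i = 3" by simp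
      with in18[OF j(1)] j(2) show "\<Lambda> i j = 0" using Z by auto
    qed
  qed
  have w4: "wedge (Frow \<Lambda> 4) (vs [1,2,3,4]) = zero_form"
    apply (subst vs_sorted, simp)
    apply (simp only: list.set)
  proof (rule wedge_Frow_basis_zero)
    fix j assume j: "j \<in> {1..8}" "j \<notin> {1,2,3,4::nat}"
    from in18[OF j(1)] j(2) show "\<Lambda> 4 j = 0" using Z by auto
  qed
  have w5: "wedge (Frow \<Lambda> 5) (vs [1,2,3,5]) = zero_form"
    apply (subst vs_sorted, simp)
    apply (simp only: list.set)
  proof (rule wedge_Frow_basis_zero)
    fix j assume j: "j \<in> {1..8}" "j \<notin> {1,2,3,5::nat}"
    from in18[OF j(1)] j(2) show "\<Lambda> 5 j = 0" using Z by auto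
  qed
  have w6: "wedge (Frow \<Lambda> 6) (vs [1,2,3,4,5,6]) = zero_form"
    apply (subst vs_sorted, simp)
    apply (simp only: list.set)
  proof (rule wedge_Frow_basis_zero)
    fix j assume j: "j \<in> {1..8}" "j \<notin> {1,2,3,4,5,6::nat}"
    from in18[OF j(1)] j(2) show "\<Lambda> 6 j = 0" using Z by auto
  qed
  have w7: "wedge (Frow \<Lambda> 7) (vs [1,2,3,4,5,7]) = zero_form"
    apply (subst vs_sorted, simp)
    apply (simp only: list.set)
  proof (rule wedge_Frow_basis_zero)
    fix j assume j: "j \<in> {1..8}" "j \<notin> {1,2,3,4,5,7::nat}"
    from in18[OF j(1)] j(2) show "\<Lambda> 7 j = 0" using Z by auto
  qed
  have dt: "det8 \<Lambda> = (\<Prod>i=1..8. \<Lambda> i i)"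
    by (rule det8_lower) (use lower in auto)
  show ?thesis using w123 w4 w5 w6 w7 lower dt GL by simp
qed


end
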